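(* Let $\mathbf{f}_1,\mathbf{f}_2,\mathbf{g}$ be power sums such that the multiplicative group generated by all their roots is torsion-free and $\mathbf{f}_1$ is reduced. Suppose that $\mathbf{f}_2=\mathbf{f}_1\cdot\mathbf{g}$ (as functions of $n$). Then every root of $\mathbf{f}_1$ has finite index in the group generated by the roots of $\mathbf{f}_2$, i.e. for every root $\gamma$ of $\mathbf{f}_1$ some positive integer power of $\gamma$ lies in the multiplicative group generated by the roots of $\mathbf{f}_2$.
   Context: A power sum is a function $n\mapsto\mathbf{f}(n)=\sum_{i=1}^k b_i\alpha_i^n$ with $k\ge1$, nonzero complex coefficients $b_i$ and pairwise distinct nonzero complex numbers $\alpha_i$; this representation is unique and the $\alpha_i$ are the roots of $\mathbf{f}$. A power sum is reduced if one of its roots equals $1$. *)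

theory Defs
  imports Complex_Main
begin

text \<open>By uniqueness of the representation, S is the set of roots of f.\<close>
definition power_sum_repr :: "(nat \<Rightarrow> complex) \<Rightarrow> complex set \<Rightarrow> (complex \<Rightarrow> complex) \<Rightarrow> bool" where
  "power_sum_repr f S c \<longleftrightarrow> finite S \<and> S \<noteq> {} \<and> 0 \<notin> S \<and> (\<forall>\<alpha>\<in>S. c \<alpha> \<noteq> 0)
     \<and> (\<forall>n. f n = (\<Sum>\<alpha>\<in>S. c \<alpha> * \<alpha> ^ n))"

inductive_set gen_group :: "complex set \<Rightarrow> complex set" for A where
  one: "1 \<in> gen_group A"
| gen: "a \<in> A \<Longrightarrow> a \<in> gen_group A"
| mult: "x \<in> gen_group A \<Longrightarrow> y \<in> gen_group A \<Longrightarrow> x * y \<in> gen_group A"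
| inv: "x \<in> gen_group A \<Longrightarrow> inverse x \<in> gen_group A"

definition torsion_free :: "complex set \<Rightarrow> bool" where
  "torsion_free G \<longleftrightarrow> (\<forall>x\<in>G. \<forall>k::nat. k > 0 \<longrightarrow> x ^ k = 1 \<longrightarrow> x = 1)"

end

theory Submission
  imports Defs
begin


lemma gg_nonzero: assumes "0 \<notin> C" "x \<in> gen_group C" shows "x \<noteq> 0"
  using assms(2) by (induction rule: gen_group.induct) (use assms in auto)

lemma gg_power: "x \<in> gen_group C \<Longrightarrow> x ^ k \<in> gen_group C"
  by (induction k) (auto intro: gen_group.intros)

lemma gg_powi: "x \<in> gen_group C \<Longrightarrow> x powi d \<in> gen_group C"
  by (auto simp: power_int_def intro: gen_group.intros gg_power)

lemma gg_subset: assumes "C \<subseteq> gen_group D" "x \<in> gen_group C" shows "x \<in> gen_group D"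
  using assms(2) by (induction rule: gen_group.induct) (use assms in \<open>auto intro: gen_group.intros\<close>)

lemma gg_mono: "C \<subseteq> D \<Longrightarrow> x \<in> gen_group C \<Longrightarrow> x \<in> gen_group D"
  by (rule gg_subset[of C D]) (auto intro: gen_group.intros)

lemma gg_empty: "x \<in> gen_group {} \<Longrightarrow> x = 1"
  by (induction rule: gen_group.induct) auto

definition hom_on :: "complex set \<Rightarrow> (complex \<Rightarrow> real) \<Rightarrow> bool" where
  "hom_on G h \<longleftrightarrow> (\<forall>x\<in>G. \<forall>y\<in>G. h (x*y) = h x + h y)"

lemma hom_one: "hom_on (gen_group C) h \<Longrightarrow> h 1 = 0"
  using gen_group.one[of C] unfolding hom_on_def by (metis add_cancel_right_right mult_1)

lemma hom_inv: "0 \<notin> C \<Longrightarrow> hom_on (gen_group C) h \<Longrightarrow> x \<in> gen_group C \<Longrightarrow> h (inverse x) = - h x"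
proof -
  assume a: "0 \<notin> C" "hom_on (gen_group C) h" "x \<in> gen_group C"
  then have "x \<noteq> 0" using gg_nonzero by blast
  have "h (x * inverse x) = h x + h (inverse x)" using a gen_group.inv unfolding hom_on_def by blast
  then show ?thesis using \<open>x \<noteq> 0\<close> hom_one[OF a(2)] by simp
qed

lemma hom_power: "hom_on (gen_group C) h \<Longrightarrow> x \<in> gen_group C \<Longrightarrow> h (x ^ k) = real k * h x"
proof (induction k)
  case 0 then show ?case using hom_one by simp
next
  case (Suc k)
  have "h (x * x^k) = h x + h (x^k)" using Suc.prems gg_power unfolding hom_on_def by blast
  then show ?case using Suc by (simp add: algebra_simps)
qed

lemma hom_powi: "0 \<notin> C \<Longrightarrow> hom_on (gen_group C) h \<Longrightarrow> x \<in> gen_group C \<Longrightarrow> h (x powi d) = of_int d * h x"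
proof (cases "d \<ge> 0")
  case True
  assume a: "hom_on (gen_group C) h" "x \<in> gen_group C"
  then show ?thesis using True hom_power[OF a, of "nat d"] by (simp add: power_int_def)
next
  case False
  assume a: "0 \<notin> C" "hom_on (gen_group C) h" "x \<in> gen_group C"
  have "x powi d = inverse (x ^ nat (-d))" using False by (simp add: power_int_def power_inverse)
  then have "h (x powi d) = - h (x ^ nat (-d))" using hom_inv[OF a(1,2) gg_power[OF a(3)]] by simp
  then show ?thesis using False hom_power[OF a(2,3), of "nat (-d)"] by simp
qed

lemma gg_insert_repr:
  assumes "0 \<notin> C" "a \<noteq> 0" "y \<in> gen_group (insert a C)"
  shows "\<exists>m\<in>gen_group C. \<exists>j::int. y = m * a powi j"
  using assms(3)
proof (induction rule: gen_group.induct)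
  case one
  then show ?case by (intro bexI[of _ 1] exI[of _ 0]) (auto intro: gen_group.intros)
next
  case (gen b)
  then show ?case
  proof
    assume "b = a" then show ?thesis by (intro bexI[of _ 1] exI[of _ 1]) (auto intro: gen_group.intros)
  next
    assume "b \<in> C" then show ?thesis by (intro bexI[of _ b] exI[of _ 0]) (auto intro: gen_group.intros)
  qed
next
  case (mult x y)
  then obtain m j m' j' where "m \<in> gen_group C" "m' \<in> gen_group C" "x = m * a powi j" "y = m' * a powi j'"
    by blast
  then show ?case using assms(2)
    by (intro bexI[of _ "m*m'"] exI[of _ "j+j'"]) (auto simp: power_int_add intro: gen_group.intros)
next
  case (inv x)
  then obtain m j where "m \<in> gen_group C" "x = m * a powi j" by blast
  then show ?case using assms(2)
    by (intro bexI[of _ "inverse m"] exI[of _ "-j"]) (auto simp: power_int_minus intro: gen_group.intros)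
qed

lemma ext_step:
  assumes C0: "0 \<notin> C" and a0: "a \<noteq> 0" and h: "hom_on (gen_group C) \<phi>"
    and v: "\<forall>d::int. a powi d \<in> gen_group C \<longrightarrow> \<phi> (a powi d) = of_int d * v"
  shows "\<exists>\<phi>'. hom_on (gen_group (insert a C)) \<phi>' \<and> (\<forall>y\<in>gen_group C. \<phi>' y = \<phi> y) \<and> \<phi>' a = v"
proof -
  let ?M = "gen_group C"
  have wd: "\<phi> m + of_int j * v = \<phi> m' + of_int j' * v"
    if "m \<in> ?M" "m' \<in> ?M" "m * a powi j = m' * a powi j'" for m m' j j'
  proof -
    have m0: "m \<noteq> 0" using that(1) gg_nonzero C0 by blast
    have "a powi (j - j') = m' * inverse m"
      using that(3) a0 m0 by (simp add: power_int_diff field_simps)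
    also have "\<dots> \<in> ?M" using that by (auto intro: gen_group.intros)
    finally have inM: "a powi (j - j') \<in> ?M" .
    have "m' = m * a powi (j - j')" using that(3) a0 m0 by (simp add: power_int_diff field_simps)
    then have "\<phi> m' = \<phi> m + \<phi> (a powi (j - j'))" using h inM that(1) unfolding hom_on_def by simp
    then show ?thesis using v inM by (simp add: algebra_simps)
  qed
  define \<phi>' where "\<phi>' y = (SOME r. \<exists>m\<in>?M. \<exists>j::int. y = m * a powi j \<and> r = \<phi> m + of_int j * v)" for y
  have val: "\<phi>' (m * a powi j) = \<phi> m + of_int j * v" if "m \<in> ?M" for m j
  proof -
    have "\<exists>m'\<in>?M. \<exists>j'::int. m * a powi j = m' * a powi j' \<and> r = \<phi> m' + of_int j' * v"
      if "r = \<phi> m + of_int j * v" for r using that \<open>m \<in> ?M\<close> by blast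
    then have ex: "\<exists>r. \<exists>m'\<in>?M. \<exists>j'::int. m * a powi j = m' * a powi j' \<and> r = \<phi> m' + of_int j' * v" by blast
    from someI_ex[OF ex] obtain m' j' where "m' \<in> ?M" "m * a powi j = m' * a powi j'"
      "\<phi>' (m * a powi j) = \<phi> m' + of_int j' * v" unfolding \<phi>'_def by blast
    then show ?thesis using wd[OF that] by metis
  qed
  have "hom_on (gen_group (insert a C)) \<phi>'"
    unfolding hom_on_def
  proof (intro ballI)
    fix x y assume "x \<in> gen_group (insert a C)" "y \<in> gen_group (insert a C)"
    then obtain m j m' j' where mm: "m \<in> ?M" "m' \<in> ?M" "x = m * a powi j" "y = m' * a powi j'"
      using gg_insert_repr[OF C0 a0] by metis
    have "x * y = (m * m') * a powi (j + j')" using mm a0 by (simp add: power_int_add)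
    moreover have "m * m' \<in> ?M" using mm by (auto intro: gen_group.intros)
    ultimately have "\<phi>' (x*y) = \<phi> (m*m') + of_int (j+j') * v" using val by simp
    also have "\<dots> = \<phi>' x + \<phi>' y" using val mm h unfolding hom_on_def by (simp add: algebra_simps)
    finally show "\<phi>' (x*y) = \<phi>' x + \<phi>' y" .
  qed
  moreover have "\<forall>y\<in>?M. \<phi>' y = \<phi> y" using val[of _ 0] by simp
  moreover have "\<phi>' a = v" using val[of 1 1] hom_one[OF h] by (simp add: gen_group.one)
  ultimately show ?thesis by blast
qed

lemma ext_v:
  assumes C0: "0 \<notin> C" and a0: "a \<noteq> 0" and h: "hom_on (gen_group C) \<phi>"
  shows "\<exists>v. \<forall>d::int. a powi d \<in> gen_group C \<longrightarrow> \<phi> (a powi d) = of_int d * v"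
proof (cases "\<exists>k>0. a ^ k \<in> gen_group C")
  case True
  then obtain k where k: "k > 0" "a ^ k \<in> gen_group C" by blast
  show ?thesis
  proof (intro exI[of _ "\<phi> (a^k) / real k"] allI impI)
    fix d :: int assume d: "a powi d \<in> gen_group C"
    have "(a powi d) ^ k = (a ^ k) powi d" by (simp add: power_int_power power_int_power' mult.commute)
    then have "real k * \<phi> (a powi d) = of_int d * \<phi> (a ^ k)"
      using hom_power[OF h d, of k] hom_powi[OF C0 h k(2), of d] by simp
    then show "\<phi> (a powi d) = of_int d * (\<phi> (a ^ k) / real k)" using k(1)
      by (simp add: field_simps)
  qed
next
  case nopow: False
  show ?thesis
  proof (intro exI[of _ 0] allI impI)
    fix d :: int assume d: "a powi d \<in> gen_group C"
    have "d = 0"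
    proof (rule ccontr)
      assume dn: "d \<noteq> 0"
      have "\<exists>k>0. a ^ k \<in> gen_group C"
      proof (cases "d > 0")
        case True
        have "a ^ nat d \<in> gen_group C" using d True by (simp add: power_int_def)
        then show ?thesis using True by (intro exI[of _ "nat d"]) simp
      next
        case f: False
        have "inverse (a powi d) \<in> gen_group C" using d by (rule gen_group.inv)
        moreover have "inverse (a powi d) = a ^ nat (-d)" using f by (simp add: power_int_def power_inverse)
        ultimately show ?thesis using f dn by (intro exI[of _ "nat (-d)"]) simp
      qed
      then show False using nopow by simp
    qed
    then show "\<phi> (a powi d) = of_int d * 0" using hom_one[OF h] by simp
  qed
qed



lemma hom_on_mono: "hom_on G h \<Longrightarrow> H \<subseteq> G \<Longrightarrow> hom_on H h"
  unfolding hom_on_def by blast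

lemma powi_in_zero:
  assumes nopow: "\<forall>k>0. a ^ k \<notin> gen_group C" and d: "a powi d \<in> gen_group C"
  shows "d = 0"
proof (rule ccontr)
  assume dn: "d \<noteq> 0"
  have "\<exists>k>0. a ^ k \<in> gen_group C"
  proof (cases "d > 0")
    case True
    have "a ^ nat d \<in> gen_group C" using d True by (simp add: power_int_def)
    then show ?thesis using True by (intro exI[of _ "nat d"]) simp
  next
    case f: False
    have "inverse (a powi d) \<in> gen_group C" using d by (rule gen_group.inv)
    moreover have "inverse (a powi d) = a ^ nat (-d)" using f by (simp add: power_int_def power_inverse)
    ultimately show ?thesis using f dn by (intro exI[of _ "nat (-d)"]) simp
  qed
  then show False using nopow by blast
qed

lemma ext_hom:
  assumes A: "finite A" "0 \<notin> A" and B: "B \<subseteq> gen_group A" and x: "x \<in> gen_group A"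
    and nopow: "\<forall>k>0. x ^ k \<notin> gen_group B"
  shows "\<exists>h. hom_on (gen_group A) h \<and> (\<forall>b\<in>B. h b = 0) \<and> h x = 1"
proof -
  have B0: "0 \<notin> B" using B gg_nonzero[OF A(2)] by blast
  have x0: "x \<noteq> 0" using x gg_nonzero[OF A(2)] by blast
  have h00: "hom_on (gen_group B) (\<lambda>_. 0)" unfolding hom_on_def by simp
  have "\<forall>d::int. x powi d \<in> gen_group B \<longrightarrow> (\<lambda>_. 0::real) (x powi d) = of_int d * 1"
    using powi_in_zero[OF nopow] by simp
  from ext_step[OF B0 x0 h00 this] obtain h0 where
    h0: "hom_on (gen_group (insert x B)) h0" "\<forall>y\<in>gen_group B. h0 y = 0" "h0 x = 1" by auto
  have C0: "0 \<notin> insert x B" using B0 x0 by auto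
  have "F \<subseteq> A \<Longrightarrow> \<exists>h. hom_on (gen_group (F \<union> insert x B)) h \<and> (\<forall>y\<in>gen_group (insert x B). h y = h0 y)"
    for F
  proof (induction F rule: infinite_finite_induct)
    case (infinite F)
    then have False using A(1) finite_subset by auto
    then show ?case ..
  next
    case empty
    then show ?case using h0 by auto
  next
    case (insert a F)
    then obtain h where h: "hom_on (gen_group (F \<union> insert x B)) h"
      "\<forall>y\<in>gen_group (insert x B). h y = h0 y" by auto
    have CC: "0 \<notin> F \<union> insert x B" using C0 insert.prems A(2) by auto
    have a0: "a \<noteq> 0" using insert.prems A(2) by auto
    obtain v where v: "\<forall>d::int. a powi d \<in> gen_group (F \<union> insert x B) \<longrightarrow> h (a powi d) = of_int d * v"
      using ext_v[OF CC a0 h(1)] by blast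
    from ext_step[OF CC a0 h(1) v] obtain h' where
      h': "hom_on (gen_group (insert a (F \<union> insert x B))) h'" "\<forall>y\<in>gen_group (F \<union> insert x B). h' y = h y"
      by blast
    have "gen_group (insert x B) \<subseteq> gen_group (F \<union> insert x B)" using gg_mono[of "insert x B"] by blast
    moreover have e: "insert a (F \<union> insert x B) = insert a F \<union> insert x B" by auto
    ultimately have "\<forall>y\<in>gen_group (insert x B). h' y = h0 y" using h' h(2) by auto
    then show ?case using h'(1) unfolding e by blast
  qed
  from this[OF subset_refl] obtain h where h: "hom_on (gen_group (A \<union> insert x B)) h"
    "\<forall>y\<in>gen_group (insert x B). h y = h0 y" by blast
  have "gen_group A \<subseteq> gen_group (A \<union> insert x B)" using gg_mono[of A "A \<union> insert x B"] by auto
  then have "hom_on (gen_group A) h" using h(1) hom_on_mono by auto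
  moreover have "\<forall>b\<in>B. h b = 0"
  proof
    fix b assume "b \<in> B"
    then have "b \<in> gen_group B" "b \<in> gen_group (insert x B)" by (auto intro: gen_group.gen)
    then show "h b = 0" using h(2) h0(2) by auto
  qed
  moreover have "h x = 1"
  proof -
    have "x \<in> gen_group (insert x B)" by (auto intro: gen_group.gen)
    then show ?thesis using h(2) h0(3) by auto
  qed
  ultimately show ?thesis by blast
qed

lemma lin_indep:
  fixes u :: "complex \<Rightarrow> complex"
  assumes "finite Z" "\<forall>n. (\<Sum>z\<in>Z. u z * z ^ n) = 0"
  shows "\<forall>z\<in>Z. u z = 0"
  using assms
proof (induction Z arbitrary: u rule: finite_induct)
  case empty then show ?case by simp
next
  case (insert z0 Z)
  have "\<forall>n. (\<Sum>z\<in>Z. (u z * (z - z0)) * z ^ n) = 0"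
  proof
    fix n
    have "(\<Sum>z\<in>Z. (u z * (z - z0)) * z ^ n) = (\<Sum>z\<in>insert z0 Z. (u z * (z - z0)) * z ^ n)"
      using insert(1,2) by simp
    also have "\<dots> = (\<Sum>z\<in>insert z0 Z. u z * z ^ Suc n - z0 * (u z * z ^ n))"
      by (rule sum.cong) (auto simp: algebra_simps)
    also have "\<dots> = (\<Sum>z\<in>insert z0 Z. u z * z ^ Suc n) - z0 * (\<Sum>z\<in>insert z0 Z. u z * z ^ n)"
      by (simp only: sum_subtractf sum_distrib_left)
    also have "\<dots> = 0" using insert(4)[rule_format, of "Suc n"] insert(4)[rule_format, of n] by (simp only:) simp
    finally show "(\<Sum>z\<in>Z. (u z * (z - z0)) * z ^ n) = 0" .
  qed
  from insert(3)[OF this] have "\<forall>z\<in>Z. u z = 0" using insert(2) by auto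
  moreover have "u z0 = 0" using insert(4)[rule_format, of 0] insert(1,2) \<open>\<forall>z\<in>Z. u z = 0\<close> by simp
  ultimately show ?case by simp
qed



fun topl :: "(complex \<Rightarrow> real) list \<Rightarrow> complex set \<Rightarrow> complex set" where
  "topl [] X = X"
| "topl (h # hs) X = topl hs {x\<in>X. h x = Max (h ` X)}"

lemma top_sub: "topl hs X \<subseteq> X"
  by (induction hs arbitrary: X) auto

lemma top_ne: "finite X \<Longrightarrow> X \<noteq> {} \<Longrightarrow> topl hs X \<noteq> {}"
proof (induction hs arbitrary: X)
  case Nil then show ?case by simp
next
  case (Cons h hs)
  have "Max (h ` X) \<in> h ` X" using Cons.prems by (intro Max_in) auto
  then have "{x\<in>X. h x = Max (h ` X)} \<noteq> {}" by force
  then show ?case using Cons by simp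
qed

lemma top_eq: "x \<in> topl hs X \<Longrightarrow> y \<in> topl hs X \<Longrightarrow> h \<in> set hs \<Longrightarrow> h x = h y"
proof (induction hs arbitrary: X)
  case Nil then show ?case by simp
next
  case (Cons g hs)
  show ?case
  proof (cases "h = g")
    case True
    have "x \<in> {x\<in>X. g x = Max (g ` X)}" "y \<in> {x\<in>X. g x = Max (g ` X)}"
      using Cons.prems(1,2) top_sub by auto
    then show ?thesis using True by simp
  next
    case False
    then show ?thesis using Cons by auto
  qed
qed

lemma top_max: "x \<in> topl (h # hs) X \<Longrightarrow> y \<in> X \<Longrightarrow> finite X \<Longrightarrow> h y \<le> h x"
proof -
  assume a: "x \<in> topl (h # hs) X" "y \<in> X" "finite X"
  then have "x \<in> {x\<in>X. h x = Max (h ` X)}" using top_sub by auto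
  then show ?thesis using a by auto
qed

lemma top_key:
  assumes "\<forall>h\<in>set hs. hom_on G h" "X \<subseteq> G" "Y \<subseteq> G" "finite X" "finite Y"
    "a \<in> X" "b \<in> Y" "a' \<in> topl hs X" "b' \<in> topl hs Y" "a * b = a' * b'"
  shows "a \<in> topl hs X \<and> b \<in> topl hs Y"
  using assms
proof (induction hs arbitrary: X Y)
  case Nil then show ?case by simp
next
  case (Cons h hs)
  let ?X1 = "{x\<in>X. h x = Max (h ` X)}" and ?Y1 = "{x\<in>Y. h x = Max (h ` Y)}"
  have a'1: "a' \<in> ?X1" and b'1: "b' \<in> ?Y1" using Cons.prems(8,9) top_sub by auto
  have hh: "hom_on G h" using Cons.prems(1) by simp
  have inG: "a \<in> G" "b \<in> G" "a' \<in> G" "b' \<in> G" using Cons.prems(2,3,6,7) a'1 b'1 by auto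
  have "h (a*b) = h a + h b" "h (a'*b') = h a' + h b'"
    using hh inG unfolding hom_on_def by blast+
  then have s: "h a + h b = h a' + h b'" using Cons.prems(10) by simp
  have "h a \<le> Max (h ` X)" "h b \<le> Max (h ` Y)" using Cons.prems(4,5,6,7) by auto
  then have "a \<in> ?X1" "b \<in> ?Y1" using s a'1 b'1 Cons.prems(6,7) by auto
  moreover have "?X1 \<subseteq> G" "?Y1 \<subseteq> G" using Cons.prems(2,3) by auto
  ultimately show ?case using Cons.IH[of ?X1 ?Y1] Cons.prems a'1 b'1 by auto
qed

lemma top_single:
  assumes "x \<in> topl hs X" "y \<in> topl hs X" "x \<in> X" "y \<in> X"
    "\<forall>a\<in>X. \<forall>a'\<in>X. a \<noteq> a' \<longrightarrow> (\<exists>h\<in>set hs. h a \<noteq> h a')"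
  shows "x = y"
  using assms top_eq by metis



lemma prod_top:
  fixes c1 c2 d :: "complex \<Rightarrow> complex"
  assumes homs: "\<forall>h\<in>set (h0 # hs). hom_on G h"
    and S1: "finite S1" "S1 \<noteq> {}" "S1 \<subseteq> G" and T: "finite T" "T \<noteq> {}" "T \<subseteq> G"
    and inj1: "\<forall>a\<in>S1. \<forall>a'\<in>S1. a \<noteq> a' \<longrightarrow> (\<exists>h\<in>set (h0 # hs). h a \<noteq> h a')"
    and injT: "\<forall>a\<in>T. \<forall>a'\<in>T. a \<noteq> a' \<longrightarrow> (\<exists>h\<in>set (h0 # hs). h a \<noteq> h a')"
    and c1: "\<forall>a\<in>S1. c1 a \<noteq> 0" and d: "\<forall>b\<in>T. d b \<noteq> 0" and S2: "finite S2"
    and eq: "\<forall>n. (\<Sum>s\<in>S2. c2 s * s ^ n) = (\<Sum>a\<in>S1. c1 a * a ^ n) * (\<Sum>b\<in>T. d b * b ^ n)"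
  shows "\<exists>a\<in>S1. \<exists>b\<in>T. a * b \<in> S2 \<and> (\<forall>a'\<in>S1. h0 a' \<le> h0 a) \<and> (\<forall>b'\<in>T. h0 b' \<le> h0 b)"
proof -
  let ?hl = "h0 # hs"
  obtain as where as: "as \<in> topl ?hl S1" using top_ne[OF S1(1,2)] by blast
  obtain bs where bs: "bs \<in> topl ?hl T" using top_ne[OF T(1,2)] by blast
  have asS: "as \<in> S1" and bsT: "bs \<in> T" using as bs top_sub by blast+
  have uniq: "a = as \<and> b = bs" if "a \<in> S1" "b \<in> T" "a * b = as * bs" for a b
  proof -
    have "a \<in> topl ?hl S1 \<and> b \<in> topl ?hl T"
      using top_key[OF homs S1(3) T(3) S1(1) T(1) that(1,2) as bs that(3)] .
    then show ?thesis using top_single[of a ?hl S1 as] top_single[of b ?hl T bs] as bs asS bsT that inj1 injT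
      by blast
  qed
  let ?P = "S1 \<times> T"
  let ?pr = "\<lambda>p::complex\<times>complex. fst p * snd p"
  let ?w = "\<lambda>p::complex\<times>complex. c1 (fst p) * d (snd p)"
  define U where "U z = (\<Sum>p\<in>{p\<in>?P. ?pr p = z}. ?w p)" for z
  define V where "V z = (if z \<in> S2 then c2 z else 0)" for z
  define Z where "Z = ?pr ` ?P \<union> S2"
  have finP: "finite ?P" using S1 T by simp
  have finZ: "finite Z" unfolding Z_def using finP S2 by simp
  have "\<forall>n. (\<Sum>z\<in>Z. (V z - U z) * z ^ n) = 0"
  proof
    fix n
    have "(\<Sum>a\<in>S1. c1 a * a ^ n) * (\<Sum>b\<in>T. d b * b ^ n) = (\<Sum>p\<in>?P. ?w p * ?pr p ^ n)"
      by (simp add: sum_product sum.cartesian_product power_mult_distrib algebra_simps case_prod_beta)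
    also have "\<dots> = (\<Sum>z\<in>?pr ` ?P. (\<Sum>p\<in>{p\<in>?P. ?pr p = z}. ?w p * ?pr p ^ n))"
      by (rule sum.image_gen[OF finP])
    also have "\<dots> = (\<Sum>z\<in>?pr ` ?P. U z * z ^ n)"
      unfolding U_def sum_distrib_right by (intro sum.cong refl) auto
    also have "\<dots> = (\<Sum>z\<in>Z. U z * z ^ n)"
    proof (rule sum.mono_neutral_left[OF finZ])
      show "?pr ` ?P \<subseteq> Z" unfolding Z_def by blast
      show "\<forall>z\<in>Z - ?pr ` ?P. U z * z ^ n = 0"
      proof
        fix z assume "z \<in> Z - ?pr ` ?P"
        then have "{p\<in>?P. ?pr p = z} = {}" by force
        then have "U z = 0" unfolding U_def by (metis sum.empty)
        then show "U z * z ^ n = 0" by simp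
      qed
    qed
    finally have e1: "(\<Sum>a\<in>S1. c1 a * a ^ n) * (\<Sum>b\<in>T. d b * b ^ n) = (\<Sum>z\<in>Z. U z * z ^ n)" .
    have "(\<Sum>s\<in>S2. c2 s * s ^ n) = (\<Sum>z\<in>S2. V z * z ^ n)" by (simp add: V_def)
    also have "\<dots> = (\<Sum>z\<in>Z. V z * z ^ n)"
      by (rule sum.mono_neutral_left[OF finZ]) (auto simp: Z_def V_def)
    finally have e2: "(\<Sum>s\<in>S2. c2 s * s ^ n) = (\<Sum>z\<in>Z. V z * z ^ n)" .
    have "(\<Sum>z\<in>Z. (V z - U z) * z ^ n) = (\<Sum>z\<in>Z. V z * z ^ n) - (\<Sum>z\<in>Z. U z * z ^ n)"
      by (simp add: algebra_simps sum_subtractf)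
    then show "(\<Sum>z\<in>Z. (V z - U z) * z ^ n) = 0" using e1 e2 eq by simp
  qed
  from lin_indep[OF finZ this] have VU: "\<forall>z\<in>Z. V z = U z" by simp
  have "{p\<in>?P. ?pr p = as * bs} = {(as, bs)}" using uniq asS bsT by auto
  then have "U (as * bs) = c1 as * d bs" unfolding U_def by simp
  also have "\<dots> \<noteq> 0" using c1 d asS bsT by simp
  finally have "U (as * bs) \<noteq> 0" .
  moreover have "as * bs \<in> Z" unfolding Z_def using asS bsT by force
  ultimately have "V (as * bs) \<noteq> 0" using VU by simp
  then have "as * bs \<in> S2" unfolding V_def by presburger
  moreover have "\<forall>a'\<in>S1. h0 a' \<le> h0 as" using top_max as S1(1) by blast
  moreover have "\<forall>b'\<in>T. h0 b' \<le> h0 bs" using top_max bs T(1) by blast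
  ultimately show ?thesis using asS bsT by blast
qed



theorem lemma5p10:
  fixes f1 f2 g :: "nat \<Rightarrow> complex"
    and S1 S2 T :: "complex set"
    and c1 c2 d :: "complex \<Rightarrow> complex"
  assumes "power_sum_repr f1 S1 c1"
    and "power_sum_repr f2 S2 c2"
    and "power_sum_repr g T d"
    and "torsion_free (gen_group (S1 \<union> S2 \<union> T))"
    and "1 \<in> S1"
    and "\<forall>n. f2 n = f1 n * g n"
  shows "\<forall>\<gamma>\<in>S1. \<exists>k::nat. k > 0 \<and> \<gamma> ^ k \<in> gen_group S2"
proof
  fix \<gamma> assume \<gamma>: "\<gamma> \<in> S1"
  note r1 = assms(1)[unfolded power_sum_repr_def]
  note r2 = assms(2)[unfolded power_sum_repr_def]
  note r3 = assms(3)[unfolded power_sum_repr_def]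
  define A where "A = S1 \<union> S2 \<union> T"
  define G where "G = gen_group A"
  have finA: "finite A" and A0: "0 \<notin> A" using r1 r2 r3 unfolding A_def by auto
  have S1G: "S1 \<subseteq> G" and S2G: "S2 \<subseteq> G" and TG: "T \<subseteq> G"
    unfolding G_def A_def by (auto intro: gen_group.gen)
  have tf: "torsion_free G" using assms(4) unfolding G_def A_def .
  show "\<exists>k::nat. k > 0 \<and> \<gamma> ^ k \<in> gen_group S2"
  proof (rule ccontr)
    assume "\<not> ?thesis"
    then have nopow: "\<forall>k>0. \<gamma> ^ k \<notin> gen_group S2" by blast
    obtain \<phi> where \<phi>: "hom_on G \<phi>" "\<forall>b\<in>S2. \<phi> b = 0" "\<phi> \<gamma> = 1"
      using ext_hom[OF finA A0 _ _ nopow] S2G \<gamma> S1G unfolding G_def by blast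
    define Pr where "Pr = {p. (fst p \<in> S1 \<and> snd p \<in> S1 \<or> fst p \<in> T \<and> snd p \<in> T) \<and> fst p \<noteq> snd p}"
    have "Pr \<subseteq> S1 \<times> S1 \<union> T \<times> T" unfolding Pr_def by auto
    then have finPr: "finite Pr" using r1 r3 finite_subset by blast
    have exh: "\<exists>\<psi>. hom_on G \<psi> \<and> \<psi> (fst p) \<noteq> \<psi> (snd p)" if "p \<in> Pr" for p
    proof -
      obtain a a' where p: "p = (a, a')" by force
      have aG: "a \<in> G" "a' \<in> G" and ne: "a \<noteq> a'" using that S1G TG unfolding p Pr_def by auto
      have a'0: "a' \<noteq> 0" using aG gg_nonzero[OF A0] unfolding G_def by blast
      define q where "q = a * inverse a'"
      have qG: "q \<in> G" unfolding q_def G_def using aG unfolding G_def by (auto intro: gen_group.intros)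
      have q1: "q \<noteq> 1" using ne a'0 unfolding q_def by (auto simp: field_simps)
      have "\<forall>k>0. q ^ k \<notin> gen_group {}"
      proof (intro allI impI notI)
        fix k :: nat assume "k > 0" "q ^ k \<in> gen_group {}"
        then have "q ^ k = 1" using gg_empty by blast
        then show False using tf qG q1 \<open>k > 0\<close> unfolding torsion_free_def by blast
      qed
      from ext_hom[OF finA A0 _ _ this] qG obtain \<psi> where \<psi>: "hom_on G \<psi>" "\<psi> q = 1"
        unfolding G_def by auto
      have "a = q * a'" unfolding q_def using a'0 by simp
      then have "\<psi> a = \<psi> q + \<psi> a'" using \<psi>(1) qG aG unfolding hom_on_def by metis
      then show ?thesis using \<psi> unfolding p by (intro exI[of _ \<psi>]) auto
    qed
    define psi where "psi p = (SOME \<psi>. hom_on G \<psi> \<and> \<psi> (fst p) \<noteq> \<psi> (snd p))" for p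
    have psi: "hom_on G (psi p) \<and> psi p (fst p) \<noteq> psi p (snd p)" if "p \<in> Pr" for p
      unfolding psi_def using someI_ex[OF exh[OF that]] .
    obtain ps where ps: "set ps = Pr" using finite_list[OF finPr] by blast
    define hs where "hs = map psi ps"
    have homs: "\<forall>h\<in>set (\<phi> # hs). hom_on G h" using \<phi>(1) psi ps unfolding hs_def by auto
    have inj1: "\<forall>a\<in>S1. \<forall>a'\<in>S1. a \<noteq> a' \<longrightarrow> (\<exists>h\<in>set (\<phi> # hs). h a \<noteq> h a')"
    proof (intro ballI impI)
      fix a a' assume "a \<in> S1" "a' \<in> S1" "a \<noteq> a'"
      then have "(a, a') \<in> Pr" unfolding Pr_def by auto
      then show "\<exists>h\<in>set (\<phi> # hs). h a \<noteq> h a'" using psi[of "(a,a')"] ps unfolding hs_def by force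
    qed
    have injT: "\<forall>a\<in>T. \<forall>a'\<in>T. a \<noteq> a' \<longrightarrow> (\<exists>h\<in>set (\<phi> # hs). h a \<noteq> h a')"
    proof (intro ballI impI)
      fix a a' assume "a \<in> T" "a' \<in> T" "a \<noteq> a'"
      then have "(a, a') \<in> Pr" unfolding Pr_def by auto
      then show "\<exists>h\<in>set (\<phi> # hs). h a \<noteq> h a'" using psi[of "(a,a')"] ps unfolding hs_def by force
    qed
    have eq: "\<forall>n. (\<Sum>s\<in>S2. c2 s * s ^ n) = (\<Sum>a\<in>S1. c1 a * a ^ n) * (\<Sum>b\<in>T. d b * b ^ n)"
      using r1 r2 r3 assms(6) by metis
    obtain a1 b1 where ab1: "a1 \<in> S1" "b1 \<in> T" "a1 * b1 \<in> S2" "\<forall>a'\<in>S1. \<phi> a' \<le> \<phi> a1"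
      "\<forall>b'\<in>T. \<phi> b' \<le> \<phi> b1"
      using prod_top[OF homs _ _ S1G _ _ TG inj1 injT _ _ _ eq] r1 r2 r3 by blast
    let ?neg = "\<lambda>h x. - (h x :: real)"
    have homs': "\<forall>h\<in>set (?neg \<phi> # map ?neg hs). hom_on G h"
      using homs unfolding hom_on_def by auto
    have inj1': "\<forall>a\<in>S1. \<forall>a'\<in>S1. a \<noteq> a' \<longrightarrow> (\<exists>h\<in>set (?neg \<phi> # map ?neg hs). h a \<noteq> h a')"
    proof (intro ballI impI)
      fix a a' assume "a \<in> S1" "a' \<in> S1" "a \<noteq> a'"
      then obtain h where "h \<in> set (\<phi> # hs)" "h a \<noteq> h a'" using inj1 by blast
      then show "\<exists>h\<in>set (?neg \<phi> # map ?neg hs). h a \<noteq> h a'"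
        by (intro bexI[of _ "?neg h"]) auto
    qed
    have injT': "\<forall>a\<in>T. \<forall>a'\<in>T. a \<noteq> a' \<longrightarrow> (\<exists>h\<in>set (?neg \<phi> # map ?neg hs). h a \<noteq> h a')"
    proof (intro ballI impI)
      fix a a' assume "a \<in> T" "a' \<in> T" "a \<noteq> a'"
      then obtain h where "h \<in> set (\<phi> # hs)" "h a \<noteq> h a'" using injT by blast
      then show "\<exists>h\<in>set (?neg \<phi> # map ?neg hs). h a \<noteq> h a'"
        by (intro bexI[of _ "?neg h"]) auto
    qed
    obtain a2 b2 where ab2: "a2 \<in> S1" "b2 \<in> T" "a2 * b2 \<in> S2" "\<forall>a'\<in>S1. - \<phi> a' \<le> - \<phi> a2"
      "\<forall>b'\<in>T. - \<phi> b' \<le> - \<phi> b2"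
      using prod_top[OF homs' _ _ S1G _ _ TG inj1' injT' _ _ _ eq] r1 r2 r3 by blast
    have "\<phi> (a1 * b1) = \<phi> a1 + \<phi> b1" using \<phi>(1) ab1 S1G TG unfolding hom_on_def by blast
    then have s1: "\<phi> a1 + \<phi> b1 = 0" using \<phi>(2) ab1(3) by simp
    have "\<phi> (a2 * b2) = \<phi> a2 + \<phi> b2" using \<phi>(1) ab2 S1G TG unfolding hom_on_def by blast
    then have s2: "\<phi> a2 + \<phi> b2 = 0" using \<phi>(2) ab2(3) by simp
    have "\<phi> 1 = 0" using hom_one \<phi>(1) unfolding G_def by blast
    then have "\<phi> a2 \<le> 0" using ab2(4) assms(5) by force
    moreover have "1 \<le> \<phi> a1" using ab1(4) \<gamma> \<phi>(3) by force
    moreover have "\<phi> b2 \<le> \<phi> b1" using ab1(5) ab2(2) by blast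
    ultimately show False using s1 s2 by linarith
  qed
qed

end
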